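(* Let $A\in\tilde\omega_n^{0,1}$ and suppose $G_A$ contains a directed cycle $C$: $v_{i_1}\to v_{i_2}\to\cdots\to v_{i_r}\to v_{i_1}$ with edge weights $a_{i_1i_2},\dots,a_{i_ri_1}$. Let $\tilde A$ be the $(n-r)\times(n-r)$ principal submatrix of $A$ obtained by deleting rows and columns $i_1,\dots,i_r$ (with $\operatorname{per}$ of the empty matrix equal to $1$). Then $$\operatorname{per}(I-A)=\operatorname{per}(I-\tilde A)\,\big(1+(-1)^r a_{i_1i_2}a_{i_2i_3}\cdots a_{i_ri_1}\big).$$
   Context: An $n\times n$ matrix is row substochastic if all its entries are nonnegative and each row sum is at most $1$. $\tilde\omega_n^{0,1}$ denotes the set of all $n\times n$ row substochastic matrices with zero main diagonal and at most one positive entry in each row. For an $n\times n$ matrix $A=[a_{ij}]$, $G_A$ is the directed weighted graph on vertices $v_1,\dots,v_n$ having a directed edge $v_i\to v_j$ of weight $a_{ij}$ exactly when $a_{ij}\ne 0$. The permanent is $\operatorname{per}(M)=\sum_{\pi\in S_n}\prod_i m_{i\pi(i)}$, and $I$ denotes an identity matrix of the appropriate size. *)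

theory Defs
  imports "HOL-Combinatorics.Permutations" Complex_Main
begin

text \<open>n x n matrices are represented as functions nat => nat => real,
  of which only the entries with indices in {..<n} matter.\<close>

definition row_substochastic :: "nat \<Rightarrow> (nat \<Rightarrow> nat \<Rightarrow> real) \<Rightarrow> bool" where
  "row_substochastic n A \<longleftrightarrow>
     (\<forall>i<n. \<forall>j<n. 0 \<le> A i j) \<and> (\<forall>i<n. (\<Sum>j<n. A i j) \<le> 1)"

definition omega01 :: "nat \<Rightarrow> (nat \<Rightarrow> nat \<Rightarrow> real) \<Rightarrow> bool" where
  "omega01 n A \<longleftrightarrow> row_substochastic n A \<and> (\<forall>i<n. A i i = 0) \<and>
     (\<forall>i<n. card {j. j < n \<and> 0 < A i j} \<le> 1)"

definition graph_edge :: "nat \<Rightarrow> (nat \<Rightarrow> nat \<Rightarrow> real) \<Rightarrow> nat \<Rightarrow> nat \<Rightarrow> bool" where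
  "graph_edge n A i j \<longleftrightarrow> i < n \<and> j < n \<and> A i j \<noteq> 0"

definition directed_cycle :: "nat \<Rightarrow> (nat \<Rightarrow> nat \<Rightarrow> real) \<Rightarrow> nat list \<Rightarrow> bool" where
  "directed_cycle n A c \<longleftrightarrow> c \<noteq> [] \<and> distinct c \<and>
     (\<forall>k < length c. graph_edge n A (c ! k) (c ! ((k + 1) mod length c)))"

text \<open>Permanent of the principal submatrix of M with rows/columns indexed by the finite set S
  (the permanent of the empty matrix is 1).\<close>
definition per_on :: "nat set \<Rightarrow> (nat \<Rightarrow> nat \<Rightarrow> real) \<Rightarrow> real" where
  "per_on S M = (\<Sum>p \<in> {p. p permutes S}. \<Prod>i\<in>S. M i (p i))"

definition idm :: "nat \<Rightarrow> nat \<Rightarrow> real" where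
  "idm i j = (if i = j then 1 else 0)"

end

theory Submission
  imports Defs "HOL-Combinatorics.Cycles"
begin

lemma permutes_fix_diff:
  assumes "p permutes S" "\<forall>x\<in>C. p x = x"
  shows "p permutes (S - C)"
  using assms unfolding permutes_def by (metis Diff_iff)

theorem mainTheorem6:
  fixes n :: nat and A :: "nat \<Rightarrow> nat \<Rightarrow> real" and c :: "nat list"
  assumes "omega01 n A"
    and "directed_cycle n A c"
  shows "per_on {..<n} (\<lambda>i j. idm i j - A i j)
       = per_on ({..<n} - set c) (\<lambda>i j. idm i j - A i j)
         * (1 + (-1) ^ length c * (\<Prod>k < length c. A (c ! k) (c ! ((k + 1) mod length c))))"
proof -
  define S where "S = {..<n}"
  define C where "C = set c"
  define r where "r = length c"
  define M where "M = (\<lambda>i j. idm i j - A i j)"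
  define e where "e k = c ! ((k+1) mod r)" for k
  have cne: "c \<noteq> []" and dist: "distinct c"
    and edge: "\<And>k. k < r \<Longrightarrow> c!k < n \<and> e k < n \<and> A (c!k) (e k) \<noteq> 0"
    using assms(2) unfolding directed_cycle_def graph_edge_def r_def e_def by auto
  have nonneg: "\<And>i j. i<n \<Longrightarrow> j<n \<Longrightarrow> 0 \<le> A i j" and diag: "\<And>i. i<n \<Longrightarrow> A i i = 0"
    and card1: "\<And>i. i<n \<Longrightarrow> card {j. j < n \<and> 0 < A i j} \<le> 1"
    using assms(1) unfolding omega01_def row_substochastic_def by auto
  have rpos: "r > 0" using cne by (simp add: r_def)
  have r2: "r \<ge> 2"
  proof (rule ccontr)
    assume "\<not> r \<ge> 2"
    with rpos have r1: "r = 1" by simp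
    then have "e 0 = c!0" by (simp add: e_def)
    with edge[of 0] r1 diag show False by auto
  qed
  have CS: "C \<subseteq> S" using edge by (auto simp: C_def S_def in_set_conv_nth r_def)
  have succ: "j = e k" if k: "k<r" and j: "j<n" and a: "A (c!k) j \<noteq> 0" for k j
  proof -
    let ?T = "{j. j < n \<and> 0 < A (c!k) j}"
    have "j \<in> ?T" using a nonneg[of "c!k" j] edge[OF k] j by auto
    moreover have "e k \<in> ?T" using nonneg[of "c!k" "e k"] edge[OF k] by auto
    moreover have "finite ?T" by auto
    ultimately show "j = e k" using card1[of "c!k"] edge[OF k] card_le_Suc0_iff_eq
      by (metis One_nat_def)
  qed
  have ek_ne: "e k \<noteq> c!k" if k: "k<r" for k
  proof -
    have "(k+1) mod r \<noteq> k"
    proof (cases "k+1 < r")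
      case True then show ?thesis by simp
    next
      case False then have "k+1 = r" using k by simp
      then show ?thesis using r2 by simp
    qed
    moreover have "(k+1) mod r < r" using rpos by simp
    ultimately show ?thesis using dist k unfolding e_def r_def
      by (simp add: nth_eq_iff_index_eq)
  qed
  have ek_lt: "(k+1) mod r < r" for k using rpos by simp
  have Mdiag: "M i i = 1" if "i<n" for i using diag[OF that] by (simp add: M_def idm_def)
  have Moff: "M (c!k) (e k) = - A (c!k) (e k)" if "k<r" for k
    using ek_ne[OF that] by (simp add: M_def idm_def)
  define \<sigma> where "\<sigma> = cycle_of_list c"
  have \<sigma>p: "\<sigma> permutes C" unfolding \<sigma>_def C_def by (rule cycle_permutes)
  have \<sigma>S: "\<sigma> permutes S" using \<sigma>p CS permutes_subset by blast
  have \<sigma>c: "\<sigma> (c!k) = e k" if k: "k<r" for k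
  proof -
    have "map \<sigma> c = rotate1 c" using cyclic_rotation[of c 1] dist unfolding \<sigma>_def by simp
    then have "map \<sigma> c ! k = rotate1 c ! k" by simp
    then show ?thesis using k unfolding r_def e_def by (simp add: nth_rotate1)
  qed
  define P1 where "P1 = {p. p permutes S - C}"
  define P2 where "P2 = (\<lambda>q. \<sigma> \<circ> q) ` P1"
  define P where "P = {p. p permutes S}"
  define g where "g p = (\<Prod>i\<in>S. M i (p i))" for p
  have finS: "finite S" by (simp add: S_def)
  have fin: "finite P" by (simp add: finite_permutations P_def finS)
  have P1P: "P1 \<subseteq> P" using permutes_subset by (auto simp: P1_def P_def)
  have P2P: "P2 \<subseteq> P"
  proof
    fix p assume "p \<in> P2"
    then obtain q where q: "q \<in> P1" "p = \<sigma> \<circ> q" by (auto simp: P2_def)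
    have "q permutes S" using q(1) permutes_subset by (auto simp: P1_def)
    then show "p \<in> P" using q(2) permutes_compose[OF _ \<sigma>S] by (auto simp: P_def)
  qed
  have c0C: "c!0 \<in> C" using rpos by (simp add: C_def r_def)
  have disj: "P1 \<inter> P2 = {}"
  proof (rule ccontr)
    assume "P1 \<inter> P2 \<noteq> {}"
    then obtain p q where p: "p \<in> P1" and q: "q \<in> P1" and pq: "p = \<sigma> \<circ> q"
      by (auto simp: P2_def)
    have "p (c!0) = c!0" using p c0C by (auto simp: P1_def permutes_not_in)
    moreover have "q (c!0) = c!0" using q c0C by (auto simp: P1_def permutes_not_in)
    ultimately have "\<sigma> (c!0) = c!0" using pq by simp
    with \<sigma>c[OF rpos] ek_ne[OF rpos] show False by simp
  qed
  have zero: "g p = 0" if pP: "p \<in> P - (P1 \<union> P2)" for p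
  proof (rule ccontr)
    assume nz: "g p \<noteq> 0"
    have pS: "p permutes S" using pP by (simp add: P_def)
    have ninj: "inj p" using permutes_inj[OF pS] .
    have Mnz: "M i (p i) \<noteq> 0" if "i \<in> S" for i using nz that finS by (auto simp: g_def)
    have alt: "p (c!k) = c!k \<or> p (c!k) = e k" if k: "k<r" for k
    proof -
      have ck: "c!k \<in> S" using edge[OF k] by (simp add: S_def)
      have pk: "p (c!k) < n" using permutes_in_image[OF pS] ck by (simp add: S_def)
      have "M (c!k) (p (c!k)) \<noteq> 0" using Mnz[OF ck] .
      then have "p (c!k) = c!k \<or> A (c!k) (p (c!k)) \<noteq> 0" by (auto simp: M_def idm_def split: if_splits)
      then show ?thesis using succ[OF k pk] by blast
    qed
    have propg: "p (e k) = e ((k+1) mod r)" if k: "k<r" and B: "p (c!k) = e k" for k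
    proof -
      have ek: "e k = c!((k+1) mod r)" by (simp add: e_def)
      from alt[OF ek_lt[of k]] show ?thesis
      proof
        assume "p (c!((k+1) mod r)) = c!((k+1) mod r)"
        then have "p (e k) = p (c!k)" using B ek by simp
        then have "e k = c!k" using ninj by (simp add: inj_eq)
        with ek_ne[OF k] show ?thesis by simp
      qed (simp add: ek)
    qed
    have notP1: "\<not> (\<forall>x\<in>C. p x = x)"
      using permutes_fix_diff[OF pS] pP by (auto simp: P1_def)
    then obtain x where "x \<in> C" "p x \<noteq> x" by blast
    then obtain j where j: "j<r" "p (c!j) \<noteq> c!j" by (auto simp: C_def r_def in_set_conv_nth)
    with alt have Bj: "p (c!j) = e j" by blast
    have allm: "p (c!((j+m) mod r)) = e ((j+m) mod r)" for m
    proof (induction m)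
      case 0 then show ?case using Bj j by simp
    next
      case (Suc m)
      have "p (e ((j+m) mod r)) = e (((j+m) mod r + 1) mod r)"
        using propg[OF ek_lt[of "j+m-1"]] Suc propg rpos by simp
      moreover have "((j+m) mod r + 1) mod r = (j + Suc m) mod r" by (simp add: mod_Suc_eq)
      ultimately show ?case by (simp add: e_def)
    qed
    have allk: "p (c!k) = e k" if k: "k<r" for k
    proof -
      have "(j + (k + r - j)) mod r = k" using j k by simp
      then show ?thesis using allm[of "k + r - j"] by simp
    qed
    define q where "q = inv \<sigma> \<circ> p"
    have qS: "q permutes S" unfolding q_def using permutes_compose[OF pS permutes_inv[OF \<sigma>S]] .
    have qC: "\<forall>x\<in>C. q x = x"
    proof
      fix x assume "x \<in> C"
      then obtain k where k: "k<r" "x = c!k" by (auto simp: C_def r_def in_set_conv_nth)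
      then have "p x = \<sigma> x" using allk \<sigma>c by simp
      then show "q x = x" unfolding q_def using permutes_inverses(2)[OF \<sigma>S] by simp
    qed
    have "q \<in> P1" using permutes_fix_diff[OF qS qC] by (simp add: P1_def)
    moreover have "p = \<sigma> \<circ> q" unfolding q_def using permutes_inverses(1)[OF \<sigma>S] by (auto simp: fun_eq_iff)
    ultimately have "p \<in> P2" by (auto simp: P2_def)
    then show False using pP by simp
  qed
  define K where "K = (-1) ^ r * (\<Prod>k < r. A (c ! k) (e k))"
  have g1: "g p = (\<Prod>i\<in>S - C. M i (p i))" if "p \<in> P1" for p
  proof -
    have "\<forall>i\<in>S - (S - C). M i (p i) = 1"
      using that CS Mdiag by (auto simp: P1_def permutes_not_in S_def)
    then show ?thesis unfolding g_def using prod.mono_neutral_right[OF finS, of "S - C" "\<lambda>i. M i (p i)"] by auto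
  qed
  have prodC: "(\<Prod>i\<in>C. M i (\<sigma> i)) = K"
  proof -
    have "C = (nth c) ` {..<r}" by (auto simp: C_def r_def in_set_conv_nth)
    moreover have "inj_on (nth c) {..<r}" using dist by (auto intro: inj_on_nth simp: r_def)
    ultimately have "(\<Prod>i\<in>C. M i (\<sigma> i)) = (\<Prod>k<r. M (c!k) (\<sigma> (c!k)))"
      by (simp add: prod.reindex)
    also have "\<dots> = (\<Prod>k<r. - A (c!k) (e k))" using \<sigma>c Moff by simp
    also have "\<dots> = K" by (simp add: prod_uminus K_def)
    finally show ?thesis .
  qed
  have g2: "g (\<sigma> \<circ> q) = (\<Prod>i\<in>S - C. M i (q i)) * K" if q: "q \<in> P1" for q
  proof -
    have qp: "q permutes S - C" using q by (simp add: P1_def)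
    have "g (\<sigma> \<circ> q) = (\<Prod>i\<in>S - C. M i (\<sigma> (q i))) * (\<Prod>i\<in>C. M i (\<sigma> (q i)))"
      unfolding g_def by (simp add: prod.subset_diff[OF CS finS])
    also have "(\<Prod>i\<in>S - C. M i (\<sigma> (q i))) = (\<Prod>i\<in>S - C. M i (q i))"
    proof (rule prod.cong[OF refl])
      fix i assume "i \<in> S - C"
      then have "q i \<in> S - C" using permutes_in_image[OF qp] by simp
      then show "M i (\<sigma> (q i)) = M i (q i)" using permutes_not_in[OF \<sigma>p] by simp
    qed
    also have "(\<Prod>i\<in>C. M i (\<sigma> (q i))) = (\<Prod>i\<in>C. M i (\<sigma> i))"
      using permutes_not_in[OF qp] by simp
    finally show ?thesis using prodC by (simp add: comp_def)
  qed
  have injc: "inj_on (\<lambda>q. \<sigma> \<circ> q) P1"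
  proof
    fix q1 q2 assume "\<sigma> \<circ> q1 = \<sigma> \<circ> q2"
    then show "q1 = q2" using permutes_inj[OF \<sigma>S] by (auto simp: fun_eq_iff inj_eq)
  qed
  have finP1: "finite P1" using fin P1P finite_subset by blast
  have finP2: "finite P2" using fin P2P finite_subset by blast
  have "per_on S M = sum g P" by (simp add: per_on_def P_def g_def)
  also have "\<dots> = sum g (P1 \<union> P2)"
    using P1P P2P zero sum.mono_neutral_right[OF fin, of "P1 \<union> P2" g] by auto
  also have "\<dots> = sum g P1 + sum g P2" using disj finP1 finP2 by (simp add: sum.union_disjoint)
  also have "sum g P1 = per_on (S - C) M" using g1 by (simp add: per_on_def P1_def)
  also have "sum g P2 = sum (g \<circ> (\<lambda>q. \<sigma> \<circ> q)) P1" unfolding P2_def using injc by (simp add: sum.reindex)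
  also have "\<dots> = per_on (S - C) M * K"
    using g2 by (simp add: per_on_def P1_def sum_distrib_right)
  finally show ?thesis by (simp add: S_def C_def M_def K_def r_def e_def algebra_simps)
qed

end
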